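(* Let $\varphi:\mathbb R\to\mathbb R$ be concave. Assume only upper-bound group constraints (with $\mathcal S\neq\emptyset$) and let $F$ be a maxmin-fair distribution over $\mathcal S$ for satisfaction $A=V$. Then for every probability distribution $D$ over $\mathcal S$, $$\sum_{u\in\mathcal U}\varphi(F[u])\ \ge\ \sum_{u\in\mathcal U}\varphi(D[u]).$$
   Context: Ranking setting: $\mathcal U=\{u_1,\dots,u_n\}$ finite set of individuals partitioned into groups $C_1,\dots,C_t$; $R:\mathcal U\to\mathbb R$ relevance with distinct values; rankings are bijections $r:\mathcal U\to[n]$. Only upper bounds: $\mathcal S=\{r:\ |\{u\in C_k: r(u)\le i\}|\le u_i^k\ \forall i\in[n],k\in[t]\}$ for given integers $u_i^k$. Value function $V(r,u)=f(r(u))-g(u)$ with $f:[n]\to\mathbb R$ non-increasing and $g:\mathcal U\to\mathbb R$ satisfying $R(u)\ge R(v)\Rightarrow g(u)\ge g(v)$. For a distribution $D$ over $\mathcal S$, $D[u]=\mathbb E_{r\sim D}[V(r,u)]$. $F$ is maxmin-fair if for every distribution $D$ over $\mathcal S$ and every $u$: $D[u]>F[u]$ implies there is $v$ with $D[v]<F[v]\le F[u]$. *)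

theory Defs
  imports "HOL-Probability.Probability"
begin

text \<open>Rankings of the finite universe U: bijections U -> {1..card U}
  (fixed to 0 outside U, so that rankings correspond one-to-one to functions on U).\<close>
definition is_ranking :: "'a set \<Rightarrow> ('a \<Rightarrow> nat) \<Rightarrow> bool" where
  "is_ranking U r \<longleftrightarrow> bij_betw r U {1..card U} \<and> (\<forall>x. x \<notin> U \<longrightarrow> r x = 0)"

definition feasible :: "'a set \<Rightarrow> nat \<Rightarrow> (nat \<Rightarrow> 'a set) \<Rightarrow> (nat \<Rightarrow> nat \<Rightarrow> int)
    \<Rightarrow> ('a \<Rightarrow> nat) set" where
  "feasible U t C ub = {r. is_ranking U r \<and>
     (\<forall>i\<in>{1..card U}. \<forall>k\<in>{1..t}. int (card {u\<in>C k. r u \<le> i}) \<le> ub i k)}"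

definition val :: "(nat \<Rightarrow> real) \<Rightarrow> ('a \<Rightarrow> real) \<Rightarrow> ('a \<Rightarrow> nat) \<Rightarrow> 'a \<Rightarrow> real" where
  "val f g r u = f (r u) - g u"

definition expval :: "(nat \<Rightarrow> real) \<Rightarrow> ('a \<Rightarrow> real) \<Rightarrow> ('a \<Rightarrow> nat) pmf \<Rightarrow> 'a \<Rightarrow> real" where
  "expval f g D u = measure_pmf.expectation D (\<lambda>r. val f g r u)"

definition maxmin_fair :: "'a set \<Rightarrow> ('a \<Rightarrow> nat) set \<Rightarrow> (nat \<Rightarrow> real) \<Rightarrow> ('a \<Rightarrow> real)
    \<Rightarrow> ('a \<Rightarrow> nat) pmf \<Rightarrow> bool" where
  "maxmin_fair U S f g F \<longleftrightarrow> set_pmf F \<subseteq> S \<and>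
     (\<forall>D. set_pmf D \<subseteq> S \<longrightarrow> (\<forall>u\<in>U. expval f g D u > expval f g F u \<longrightarrow>
        (\<exists>v\<in>U. expval f g D v < expval f g F v \<and> expval f g F v \<le> expval f g F u)))"

end

theory Submission
  imports Defs
begin


lemma layer_ineq:
  fixes x d :: "'a \<Rightarrow> real" and h :: "real \<Rightarrow> real"
  assumes "finite U"
    and "\<And>a b. a \<le> b \<Longrightarrow> h b \<le> h a"
    and "\<And>u. u \<in> U \<Longrightarrow> h (x u) \<ge> 0"
    and "\<And>c. (\<Sum>u\<in>{u\<in>U. x u \<le> c}. d u) \<le> 0"
  shows "(\<Sum>u\<in>U. h (x u) * d u) \<le> 0"
  using assms
proof (induction "card U" arbitrary: U h rule: less_induct)
  case less
  show ?case
  proof (cases "U = {}")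
    case True then show ?thesis by simp
  next
    case False
    define m where "m = Max (x ` U)"
    have mU: "\<And>u. u \<in> U \<Longrightarrow> x u \<le> m" using less.prems(1) m_def by auto
    define U' where "U' = {u\<in>U. x u < m}"
    have "m \<in> x ` U" using False less.prems(1) m_def by simp
    then obtain u0 where u0: "u0 \<in> U" "x u0 = m" by auto
    have cU': "card U' < card U"
      by (rule psubset_card_mono) (use less.prems(1) u0 U'_def in auto)
    have fU': "finite U'" using less.prems(1) U'_def by simp
    define h' where "h' = (\<lambda>t. h t - h m)"
    have IH: "(\<Sum>u\<in>U'. h' (x u) * d u) \<le> 0"
    proof (rule less.hyps[OF cU' fU'])
      show "\<And>a b. a \<le> b \<Longrightarrow> h' b \<le> h' a" using less.prems(2) h'_def by simp
      show "\<And>u. u \<in> U' \<Longrightarrow> 0 \<le> h' (x u)" using less.prems(2) h'_def U'_def by fastforce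
      fix c
      show "(\<Sum>u\<in>{u \<in> U'. x u \<le> c}. d u) \<le> 0"
      proof (cases "c < m")
        case True
        then have "{u \<in> U'. x u \<le> c} = {u\<in>U. x u \<le> c}" using U'_def by auto
        then show ?thesis using less.prems(4) by simp
      next
        case False
        show ?thesis
        proof (cases "U' = {}")
          case True then show ?thesis by simp
        next
          case ne: False
          define m' where "m' = Max (x ` U')"
          have "m' \<in> x ` U'" using ne fU' m'_def by simp
          then have "m' < m" using U'_def by auto
          have "U' = {u\<in>U. x u \<le> m'}"
            using fU' m'_def \<open>m' < m\<close> U'_def by auto
          moreover have "{u \<in> U'. x u \<le> c} = U'" using False U'_def by auto
          ultimately show ?thesis using less.prems(4)[of m'] by simp
        qed
      qed
    qed
    have split: "(\<Sum>u\<in>U. h (x u) * d u) = (\<Sum>u\<in>U. h' (x u) * d u) + h m * (\<Sum>u\<in>U. d u)"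
      by (simp add: h'_def sum_distrib_left algebra_simps sum.distrib[symmetric] sum_subtractf)
    have "(\<Sum>u\<in>U. h' (x u) * d u) = (\<Sum>u\<in>U'. h' (x u) * d u)"
    proof (rule sum.mono_neutral_right)
      show "finite U" by (rule less.prems(1))
      show "U' \<subseteq> U" using U'_def by auto
      show "\<forall>i\<in>U - U'. h' (x i) * d i = 0" using mU U'_def h'_def by force
    qed
    moreover have "(\<Sum>u\<in>U. d u) \<le> 0"
    proof -
      have "{u\<in>U. x u \<le> m} = U" using mU by auto
      then show ?thesis using less.prems(4)[of m] by simp
    qed
    moreover have "h m \<ge> 0" using less.prems(3)[OF u0(1)] u0(2) by simp
    ultimately show ?thesis using split IH
      by (smt (verit) mult_nonneg_nonpos)
  qed
qed

lemma slope_chain: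
  fixes \<psi> :: "real \<Rightarrow> real"
  assumes "convex_on UNIV \<psi>" "a < b" "b < c"
  shows "(\<psi> a - \<psi> b) / (a - b) \<le> (\<psi> b - \<psi> c) / (b - c)"
  using convex_on_slope_le[OF assms(1) _ _ assms(2,3)] by (meson UNIV_I order_trans)

lemma supergrad:
  fixes \<phi> :: "real \<Rightarrow> real"
  assumes "concave_on UNIV \<phi>"
  obtains s where "\<And>a b. a \<le> b \<Longrightarrow> s b \<le> s a"
    and "\<And>c y. \<phi> y \<le> \<phi> c + s c * (y - c)"
proof -
  define \<psi> where "\<psi> = (\<lambda>x. - \<phi> x)"
  have cv: "convex_on UNIV \<psi>" using assms \<psi>_def by (simp add: convex_on_iff_concave)
  define sl where "sl = (\<lambda>a b. (\<psi> a - \<psi> b) / (a - b))"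
  define s' where "s' = (\<lambda>c. Sup ((\<lambda>x. sl x c) ` {x. x < c}))"
  have bdd: "bdd_above ((\<lambda>x. sl x c) ` {x. x < c})" for c
  proof -
    have "sl x c \<le> sl c (c+1)" if "x < c" for x
      using slope_chain[OF cv that, of "c+1"] sl_def by simp
    then show ?thesis unfolding bdd_above_def by blast
  qed
  have ne: "(\<lambda>x. sl x c) ` {x. x < c} \<noteq> {}" for c
    by (auto intro!: exI[of _ "c - 1"])
  have le_s: "sl x c \<le> s' c" if "x < c" for x c
    unfolding s'_def by (rule cSup_upper) (use that bdd in auto)
  have s_le: "s' c \<le> sl c y" if "c < y" for c y
    unfolding s'_def
    by (rule cSup_least[OF ne]) (use that slope_chain[OF cv] sl_def in auto)
  have mono: "s' a \<le> s' b" if "a \<le> b" for a b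
  proof (cases "a = b")
    case False
    then have "a < b" using that by simp
    then show ?thesis using s_le[of a b] le_s[of a b] sl_def by simp
  qed simp
  have sub: "\<psi> y \<ge> \<psi> c + s' c * (y - c)" for c y
  proof (cases y c rule: linorder_cases)
    case less
    have "sl y c \<le> s' c" by (rule le_s[OF less])
    then have "(\<psi> y - \<psi> c) / (y - c) \<le> s' c" using sl_def by simp
    then have "(\<psi> c - \<psi> y) / (c - y) \<le> s' c"
      by (smt (verit, ccfv_SIG) minus_divide_divide)
    then have "\<psi> c - \<psi> y \<le> s' c * (c - y)" using less by (simp add: divide_le_eq)
    then show ?thesis by (simp add: algebra_simps)
  next
    case greater
    have "s' c \<le> sl c y" by (rule s_le[OF greater])
    then have "s' c \<le> (\<psi> c - \<psi> y) / (c - y)" using sl_def by simp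
    then have "s' c \<le> (\<psi> y - \<psi> c) / (y - c)"
      by (smt (verit, ccfv_SIG) minus_divide_divide)
    then have "s' c * (y - c) \<le> \<psi> y - \<psi> c" using greater by (simp add: le_divide_eq)
    then show ?thesis by (simp add: algebra_simps)
  qed simp
  show ?thesis
  proof (rule that[of "\<lambda>c. - s' c"])
    show "\<And>a b. a \<le> b \<Longrightarrow> - s' b \<le> - s' a" using mono by simp
    show "\<phi> y \<le> \<phi> c + - s' c * (y - c)" for c y using sub[of c y] \<psi>_def by simp
  qed
qed

lemma concave_majorize:
  fixes x y :: "'a \<Rightarrow> real" and \<phi> :: "real \<Rightarrow> real"
  assumes "finite U" "concave_on UNIV \<phi>"
    and "\<And>c. (\<Sum>u\<in>{u\<in>U. x u \<le> c}. y u) \<le> (\<Sum>u\<in>{u\<in>U. x u \<le> c}. x u)"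
    and "(\<Sum>u\<in>U. y u) = (\<Sum>u\<in>U. x u)"
  shows "(\<Sum>u\<in>U. \<phi> (y u)) \<le> (\<Sum>u\<in>U. \<phi> (x u))"
proof (cases "U = {}")
  case True then show ?thesis by simp
next
  case False
  obtain s where smono: "\<And>a b. a \<le> b \<Longrightarrow> s b \<le> s a"
    and sg: "\<And>c y. \<phi> y \<le> \<phi> c + s c * (y - c)"
    using supergrad[OF assms(2)] by blast
  define m where "m = Max (x ` U)"
  have mU: "\<And>u. u \<in> U \<Longrightarrow> x u \<le> m" using assms(1) m_def by auto
  define d where "d = (\<lambda>u. y u - x u)"
  have L: "(\<Sum>u\<in>U. (s (x u) - s m) * d u) \<le> 0"
  proof (rule layer_ineq[OF assms(1), of "\<lambda>t. s t - s m"])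
    show "\<And>a b. a \<le> b \<Longrightarrow> s b - s m \<le> s a - s m" using smono by simp
    show "\<And>u. u \<in> U \<Longrightarrow> 0 \<le> s (x u) - s m" using smono mU by simp
    show "(\<Sum>u\<in>{u \<in> U. x u \<le> c}. d u) \<le> 0" for c
      using assms(3)[of c] by (simp add: d_def sum_subtractf)
  qed
  have d0: "(\<Sum>u\<in>U. d u) = 0" using assms(4) by (simp add: d_def sum_subtractf)
  have "(\<Sum>u\<in>U. s (x u) * d u) = (\<Sum>u\<in>U. (s (x u) - s m) * d u) + s m * (\<Sum>u\<in>U. d u)"
    by (simp add: sum_distrib_left algebra_simps sum.distrib[symmetric] sum_subtractf)
  with L d0 have key: "(\<Sum>u\<in>U. s (x u) * d u) \<le> 0" by simp
  have "(\<Sum>u\<in>U. \<phi> (y u)) \<le> (\<Sum>u\<in>U. \<phi> (x u) + s (x u) * d u)"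
    by (rule sum_mono) (simp add: sg d_def)
  also have "\<dots> = (\<Sum>u\<in>U. \<phi> (x u)) + (\<Sum>u\<in>U. s (x u) * d u)" by (simp add: sum.distrib)
  finally show ?thesis using key by simp
qed



definition tr :: "'a \<Rightarrow> 'a \<Rightarrow> 'a \<Rightarrow> 'a" where
  "tr x y u = (if u = x then y else if u = y then x else u)"

definition NL :: "'a set \<Rightarrow> ('a \<Rightarrow> nat) \<Rightarrow> nat \<Rightarrow> nat" where
  "NL L q i = card {w\<in>L. q w \<le> i}"

locale rk =
  fixes U :: "'a set" and t :: nat and C :: "nat \<Rightarrow> 'a set" and ub :: "nat \<Rightarrow> nat \<Rightarrow> int"
  assumes finU: "finite U" and Csub: "\<And>k. k\<in>{1..t} \<Longrightarrow> C k \<subseteq> U"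
   and Cdisj: "\<And>k l. k\<in>{1..t} \<Longrightarrow> l\<in>{1..t} \<Longrightarrow> k\<noteq>l \<Longrightarrow> C k \<inter> C l = {}"
   and Ccov: "(\<Union>k\<in>{1..t}. C k) = U"
begin

abbreviation "S \<equiv> feasible U t C ub"
abbreviation "n \<equiv> card U"

lemma rS_bij: "r \<in> S \<Longrightarrow> bij_betw r U {1..n}"
  by (simp add: feasible_def is_ranking_def)

lemma rS_range: "r \<in> S \<Longrightarrow> u \<in> U \<Longrightarrow> 1 \<le> r u \<and> r u \<le> n"
  using rS_bij bij_betwE by fastforce

lemma rS_inj: "r \<in> S \<Longrightarrow> inj_on r U"
  using rS_bij bij_betw_imp_inj_on by blast

lemma rS_out: "r \<in> S \<Longrightarrow> u \<notin> U \<Longrightarrow> r u = 0"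
  by (simp add: feasible_def is_ranking_def)

lemma rS_feas: "r \<in> S \<Longrightarrow> j\<in>{1..n} \<Longrightarrow> k\<in>{1..t} \<Longrightarrow> int (card {u\<in>C k. r u \<le> j}) \<le> ub j k"
  by (simp add: feasible_def)

lemma card_window:
  assumes "r \<in> S" "a \<le> b" "b \<le> n"
  shows "card {u\<in>U. a < r u \<and> r u \<le> b} = b - a"
proof -
  let ?X = "{u\<in>U. a < r u \<and> r u \<le> b}"
  have "r ` ?X = {a<..b}"
  proof
    show "r ` ?X \<subseteq> {a<..b}" by auto
    show "{a<..b} \<subseteq> r ` ?X"
    proof
      fix v assume v: "v \<in> {a<..b}"
      then have "v \<in> {1..n}" using assms by auto
      then obtain u where "u \<in> U" "r u = v" using rS_bij[OF assms(1)] by (metis bij_betw_def imageE)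
      then show "v \<in> r ` ?X" using v by auto
    qed
  qed
  moreover have "inj_on r ?X" using rS_inj[OF assms(1)] by (rule inj_on_subset) auto
  ultimately have "card ?X = card {a<..b}" using card_image[of r ?X] by simp
  then show ?thesis by simp
qed

lemma tr_in: "x \<in> A \<Longrightarrow> y \<in> A \<Longrightarrow> u \<in> A \<Longrightarrow> tr x y u \<in> A"
  by (simp add: tr_def)

lemma tr_tr: "tr x y (tr x y u) = u"
  by (simp add: tr_def)

lemma swap_ranking:
  assumes "r \<in> S" "x \<in> U" "y \<in> U"
  shows "is_ranking U (r \<circ> tr x y)"
proof -
  have img: "tr x y ` U = U"
  proof
    show "tr x y ` U \<subseteq> U" using tr_in[OF assms(2,3)] by blast
    show "U \<subseteq> tr x y ` U"
    proof
      fix u assume "u \<in> U"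
      then have "tr x y u \<in> U" using tr_in[OF assms(2,3)] by blast
      moreover have "u = tr x y (tr x y u)" by (simp add: tr_tr)
      ultimately show "u \<in> tr x y ` U" by blast
    qed
  qed
  have "inj_on (tr x y) U" by (rule inj_onI) (metis tr_tr)
  then have "bij_betw (tr x y) U U" using img by (simp add: bij_betw_def)
  then have "bij_betw (r \<circ> tr x y) U {1..n}" using rS_bij[OF assms(1)] by (rule bij_betw_trans)
  moreover have "\<forall>z. z \<notin> U \<longrightarrow> (r \<circ> tr x y) z = 0"
    using assms(2,3) rS_out[OF assms(1)] by (simp add: tr_def)
  ultimately show ?thesis by (simp add: is_ranking_def)
qed

lemma swap_same:
  assumes "r \<in> S" "k0 \<in> {1..t}" "x \<in> C k0" "y \<in> C k0"
  shows "r \<circ> tr x y \<in> S"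
proof -
  have xU: "x \<in> U" "y \<in> U" using assms Csub by auto
  have "int (card {u\<in>C k. (r \<circ> tr x y) u \<le> j}) \<le> ub j k" if j: "j\<in>{1..n}" and k: "k\<in>{1..t}" for j k
  proof -
    have "{u\<in>C k. (r \<circ> tr x y) u \<le> j} = tr x y ` {u\<in>C k. r u \<le> j}"
    proof (cases "k = k0")
      case True
      show ?thesis
      proof
        show "{u \<in> C k. (r \<circ> tr x y) u \<le> j} \<subseteq> tr x y ` {u \<in> C k. r u \<le> j}"
        proof
          fix u assume "u \<in> {u \<in> C k. (r \<circ> tr x y) u \<le> j}"
          then have "tr x y u \<in> {u \<in> C k. r u \<le> j}"
            using True assms tr_in[of x "C k0" y] by auto
          moreover have "u = tr x y (tr x y u)" by (simp add: tr_tr)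
          ultimately show "u \<in> tr x y ` {u \<in> C k. r u \<le> j}" by blast
        qed
        show "tr x y ` {u \<in> C k. r u \<le> j} \<subseteq> {u \<in> C k. (r \<circ> tr x y) u \<le> j}"
          using True assms tr_in[of x "C k0" y] by (auto simp: tr_tr)
      qed
    next
      case False
      then have "x \<notin> C k" "y \<notin> C k" using Cdisj[OF k assms(2)] assms by auto
      then have idk: "\<And>u. u \<in> C k \<Longrightarrow> tr x y u = u" by (auto simp: tr_def)
      let ?A = "{u\<in>C k. r u \<le> j}"
      have "tr x y ` ?A = (\<lambda>u. u) ` ?A" by (rule image_cong) (auto simp: idk)
      then have "tr x y ` ?A = ?A" by simp
      moreover have "{u\<in>C k. (r \<circ> tr x y) u \<le> j} = ?A" using idk by auto
      ultimately show ?thesis by simp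
    qed
    moreover have "inj_on (tr x y) A" for A by (rule inj_onI) (metis tr_tr)
    ultimately have "card {u\<in>C k. (r \<circ> tr x y) u \<le> j} = card {u\<in>C k. r u \<le> j}"
      by (simp add: card_image)
    then show ?thesis using rS_feas[OF assms(1) j k] by simp
  qed
  then have fe: "\<forall>j\<in>{1..n}. \<forall>k\<in>{1..t}. int (card {u\<in>C k. (r \<circ> tr x y) u \<le> j}) \<le> ub j k"
    by blast
  have rk: "is_ranking U (r \<circ> tr x y)" by (rule swap_ranking[OF assms(1) xU])
  show ?thesis unfolding feasible_def by (rule CollectI, rule conjI[OF rk fe])
qed


lemma finC: "k \<in> {1..t} \<Longrightarrow> finite (C k)"
  using Csub finU finite_subset by blast

lemma swap_cross:
  assumes rS: "r \<in> S" and k0: "k0 \<in> {1..t}" and x: "x \<in> C k0" and y: "y \<in> U" "y \<notin> C k0"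
    and ryx: "r y < r x"
    and hyp: "\<And>j. j\<in>{1..n} \<Longrightarrow> r y \<le> j \<Longrightarrow> j < r x \<Longrightarrow> int (card {u\<in>C k0. r u \<le> j}) + 1 \<le> ub j k0"
  shows "r \<circ> tr x y \<in> S"
proof -
  have xU: "x \<in> U" using x k0 Csub by blast
  have "int (card {u\<in>C k. (r \<circ> tr x y) u \<le> j}) \<le> ub j k" if j: "j\<in>{1..n}" and k: "k\<in>{1..t}" for j k
  proof -
    let ?A = "{u\<in>C k. r u \<le> j}"
    let ?B = "{u\<in>C k. (r \<circ> tr x y) u \<le> j}"
    have fA: "finite ?A" using finC[OF k] by simp
    show ?thesis
    proof (cases "k = k0 \<and> r y \<le> j \<and> j < r x")
      case True
      have "?B \<subseteq> insert x ?A"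
      proof
        fix u assume u: "u \<in> ?B"
        show "u \<in> insert x ?A"
        proof (cases "u = x")
          case False
          then have "u \<noteq> y" using u y True by auto
          then show ?thesis using u False by (auto simp: tr_def)
        qed simp
      qed
      then have "card ?B \<le> card (insert x ?A)" using fA by (intro card_mono) auto
      also have "\<dots> \<le> card ?A + 1" using fA by (simp add: card_insert_if)
      finally have "int (card ?B) \<le> int (card ?A) + 1" by simp
      also have "\<dots> \<le> ub j k" using hyp[OF j] True by simp
      finally show ?thesis .
    next
      case False
      have "?B \<subseteq> ?A"
      proof
        fix u assume u: "u \<in> ?B"
        show "u \<in> ?A"
        proof (cases "k = k0")
          case True
          with False have nj: "\<not> (r y \<le> j \<and> j < r x)" by simp
          show ?thesis
          proof (cases "u = x")
            case True
            then have "r y \<le> j" using u by (simp add: tr_def)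
            then have "r x \<le> j" using nj by simp
            then show ?thesis using True u by simp
          next
            case False
            then have "u \<noteq> y" using u y \<open>k = k0\<close> by auto
            then show ?thesis using u False by (auto simp: tr_def)
          qed
        next
          case False
          then have "x \<notin> C k" using Cdisj[OF k k0] x by auto
          then have ux: "u \<noteq> x" using u by auto
          show ?thesis
          proof (cases "u = y")
            case True
            then have "r x \<le> j" using u ux by (simp add: tr_def)
            then have "r y \<le> j" using ryx by simp
            then show ?thesis using True u by simp
          next
            case False
            then show ?thesis using u ux by (auto simp: tr_def)
          qed
        qed
      qed
      then have "card ?B \<le> card ?A" using fA by (intro card_mono) auto
      then show ?thesis using rS_feas[OF rS j k] by simp
    qed
  qed
  then have fe: "\<forall>j\<in>{1..n}. \<forall>k\<in>{1..t}. int (card {u\<in>C k. (r \<circ> tr x y) u \<le> j}) \<le> ub j k"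
    by blast
  have rk: "is_ranking U (r \<circ> tr x y)" by (rule swap_ranking[OF rS xU y(1)])
  show ?thesis unfolding feasible_def by (rule CollectI, rule conjI[OF rk fe])
qed

end


context rk begin

lemma card_partition:
  assumes "Y \<subseteq> U"
  shows "card Y = (\<Sum>k\<in>{1..t}. card (Y \<inter> C k))"
proof -
  have "Y = (\<Union>k\<in>{1..t}. Y \<inter> C k)" using assms Ccov by blast
  moreover have "card (\<Union>k\<in>{1..t}. Y \<inter> C k) = (\<Sum>k\<in>{1..t}. card (Y \<inter> C k))"
  proof (rule card_UN_disjoint)
    show "finite {1..t}" by simp
    show "\<forall>k\<in>{1..t}. finite (Y \<inter> C k)" using finC by blast
    show "\<forall>k\<in>{1..t}. \<forall>l\<in>{1..t}. k \<noteq> l \<longrightarrow> Y \<inter> C k \<inter> (Y \<inter> C l) = {}"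
      using Cdisj by blast
  qed
  ultimately show ?thesis by simp
qed

lemma tr_other: "u \<noteq> x \<Longrightarrow> u \<noteq> y \<Longrightarrow> tr x y u = u"
  by (simp add: tr_def)

lemma exchange:
  assumes rS: "r \<in> S" and rsS: "rs \<in> S" and L: "L \<subseteq> U"
   and dfc: "NL L r i < NL L rs i"
   and minimal: "\<And>j. j < i \<Longrightarrow> NL L rs j \<le> NL L r j"
  shows "\<exists>q\<in>S. (\<forall>w\<in>L. q w \<le> r w) \<and> (\<exists>w\<in>L. q w < r w)"
proof -
  have finL: "finite L" using L finU finite_subset by blast
  have "i < n"
  proof (rule ccontr)
    assume "\<not> i < n"
    then have "{w\<in>L. r w \<le> i} = L" using rS_range[OF rS] L by force
    moreover have "NL L rs i \<le> card L" unfolding NL_def using finL by (intro card_mono) auto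
    ultimately show False using dfc unfolding NL_def by simp
  qed
  have i0: "0 < i"
  proof (rule ccontr)
    assume "\<not> 0 < i"
    then have "{w\<in>L. rs w \<le> i} = {}" using rS_range[OF rsS] L by force
    then have "NL L rs i = 0" unfolding NL_def by (simp only: card.empty)
    then show False using dfc by simp
  qed
  define Xr where "Xr = {w\<in>L. r w \<le> i}"
  define Xs where "Xs = {w\<in>L. rs w \<le> i}"
  have "card Xr = (\<Sum>k\<in>{1..t}. card (Xr \<inter> C k))" by (rule card_partition) (use L Xr_def in auto)
  moreover have "card Xs = (\<Sum>k\<in>{1..t}. card (Xs \<inter> C k))" by (rule card_partition) (use L Xs_def in auto)
  moreover have "card Xr < card Xs" using dfc unfolding Xr_def Xs_def NL_def by simp
  ultimately have "\<exists>k\<in>{1..t}. card (Xr \<inter> C k) < card (Xs \<inter> C k)"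
    by (metis (no_types, lifting) not_less sum_mono)
  then obtain k where k: "k \<in> {1..t}" and kk: "card (Xr \<inter> C k) < card (Xs \<inter> C k)" by blast
  have fCk: "finite (C k)" using finC[OF k] .
  have CkU: "C k \<subseteq> U" using Csub[OF k] .
  obtain w0 where w0: "w0 \<in> L" "w0 \<in> C k" "i < r w0"
  proof -
    have "\<not> (L \<inter> C k \<subseteq> Xr \<inter> C k)"
    proof
      assume "L \<inter> C k \<subseteq> Xr \<inter> C k"
      then have "card (L \<inter> C k) \<le> card (Xr \<inter> C k)" using fCk by (intro card_mono) auto
      moreover have "card (Xs \<inter> C k) \<le> card (L \<inter> C k)" using fCk Xs_def by (intro card_mono) auto
      ultimately show False using kk by simp
    qed
    then show ?thesis using that Xr_def by force
  qed
  show ?thesis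
  proof (cases "\<exists>x\<in>C k. x \<notin> L \<and> r x \<le> i")
    case True
    then obtain x where x: "x \<in> C k" "x \<notin> L" "r x \<le> i" by blast
    have qS: "r \<circ> tr w0 x \<in> S" by (rule swap_same[OF rS k w0(2) x(1)])
    have "\<forall>w\<in>L. (r \<circ> tr w0 x) w \<le> r w"
    proof
      fix w assume "w \<in> L"
      show "(r \<circ> tr w0 x) w \<le> r w"
      proof (cases "w = w0")
        case True then show ?thesis using x w0 by (simp add: tr_def)
      next
        case False
        then have "w \<noteq> x" using x \<open>w \<in> L\<close> by auto
        then show ?thesis using False by (simp add: tr_def)
      qed
    qed
    moreover have "(r \<circ> tr w0 x) w0 < r w0" using x w0 by (simp add: tr_def)
    ultimately show ?thesis using qS w0(1) by blast
  next
    case False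
    then have allL: "\<And>u. u \<in> C k \<Longrightarrow> r u \<le> i \<Longrightarrow> u \<in> L" by blast
    define a where "a = card {u\<in>C k. r u \<le> i}"
    have "{u\<in>C k. r u \<le> i} = Xr \<inter> C k" using allL Xr_def by auto
    then have a_lt: "a < card (Xs \<inter> C k)" using kk a_def by simp
    have "card (Xs \<inter> C k) \<le> card {u\<in>C k. rs u \<le> i}" using fCk Xs_def by (intro card_mono) auto
    with a_lt have a_lt2: "a < card {u\<in>C k. rs u \<le> i}" by simp
    define P where "P = r ` {u\<in>C k. i < r u}"
    have finP: "finite P" using fCk P_def by simp
    have "r w0 \<in> P" using w0 P_def by auto
    then have neP: "P \<noteq> {}" by auto
    define p where "p = Min P"
    have "p \<in> P" using finP neP p_def by simp
    then obtain x where x: "x \<in> C k" "i < r x" "r x = p" using P_def by auto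
    have between: "\<And>u. u \<in> C k \<Longrightarrow> r u \<le> i \<or> p \<le> r u"
      using finP P_def p_def by force
    have xU: "x \<in> U" using x CkU by blast
    show ?thesis
    proof (cases "x \<in> L")
      case False
      have "w0 \<noteq> x" using False w0 by auto
      then have "r w0 \<noteq> r x" using rS_inj[OF rS] w0 xU CkU by (meson inj_onD subsetD)
      moreover have "p \<le> r w0" using between[OF w0(2)] w0(3) by simp
      ultimately have lt: "r x < r w0" using x by simp
      have qS: "r \<circ> tr w0 x \<in> S" by (rule swap_same[OF rS k w0(2) x(1)])
      have "\<forall>w\<in>L. (r \<circ> tr w0 x) w \<le> r w"
      proof
        fix w assume "w \<in> L"
        show "(r \<circ> tr w0 x) w \<le> r w"
        proof (cases "w = w0")
          case True then show ?thesis using lt by (simp add: tr_def)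
        next
          case F: False
          then have "w \<noteq> x" using False \<open>w \<in> L\<close> by auto
          then show ?thesis using F by (simp add: tr_def)
        qed
      qed
      moreover have "(r \<circ> tr w0 x) w0 < r w0" using lt by (simp add: tr_def)
      ultimately show ?thesis using qS w0(1) by blast
    next
      case True
      define B where "B = {j\<in>{1..<i}. ub j k \<le> int (card {u\<in>C k. r u \<le> j})}"
      define j0 where "j0 = (if B = {} then 0 else Max B)"
      have finB: "finite B" using B_def by simp
      have j0i: "j0 < i"
      proof (cases "B = {}")
        case False
        then have "Max B \<in> B" using finB by simp
        then have "Max B < i" unfolding B_def by simp
        then show ?thesis using j0_def False by simp
      qed (simp add: j0_def i0)
      have j0B: "\<And>j. j \<in> B \<Longrightarrow> j \<le> j0" using finB j0_def by auto
      have "\<exists>y\<in>U. y \<notin> L \<and> j0 < r y \<and> r y \<le> i"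
      proof (rule ccontr)
        assume "\<not> ?thesis"
        then have inL: "\<And>u. u \<in> U \<Longrightarrow> j0 < r u \<Longrightarrow> r u \<le> i \<Longrightarrow> u \<in> L" by blast
        define W where "W = {u\<in>U. j0 < r u \<and> r u \<le> i}"
        have cW: "card W = i - j0" using card_window[OF rS, of j0 i] j0i \<open>i < n\<close> W_def by simp
        define Ws where "Ws = {u\<in>U. j0 < rs u \<and> rs u \<le> i}"
        have cWs: "card Ws = i - j0" using card_window[OF rsS, of j0 i] j0i \<open>i < n\<close> Ws_def by simp
        have e1: "{w\<in>L. r w \<le> i} = {w\<in>L. r w \<le> j0} \<union> W"
          using inL L W_def j0i by auto
        have d1: "{w\<in>L. r w \<le> j0} \<inter> W = {}" using W_def by auto
        have fW: "finite W" "finite Ws" using W_def Ws_def finU by auto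
        have "NL L r i = NL L r j0 + (i - j0)"
          unfolding NL_def e1 using card_Un_disjoint[OF _ fW(1) d1] finL cW by simp
        moreover have "{w\<in>L. rs w \<le> i} \<subseteq> {w\<in>L. rs w \<le> j0} \<union> Ws"
          using L Ws_def by auto
        then have "NL L rs i \<le> card ({w\<in>L. rs w \<le> j0} \<union> Ws)"
          unfolding NL_def using finL fW by (intro card_mono) auto
        then have "NL L rs i \<le> NL L rs j0 + (i - j0)"
          unfolding NL_def using card_Un_le[of "{w\<in>L. rs w \<le> j0}" Ws] cWs by simp
        moreover have "NL L rs j0 \<le> NL L r j0" using minimal[OF j0i] .
        ultimately show False using dfc by simp
      qed
      then obtain y where y: "y \<in> U" "y \<notin> L" "j0 < r y" "r y \<le> i" by blast
      have yCk: "y \<notin> C k" using allL y by blast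
      have ryx: "r y < r x" using y x by simp
      have hyp: "int (card {u\<in>C k. r u \<le> j}) + 1 \<le> ub j k"
        if j: "j\<in>{1..n}" "r y \<le> j" "j < r x" for j
      proof (cases "j < i")
        case True
        have "j \<notin> B"
        proof
          assume "j \<in> B"
          then have "j \<le> j0" by (rule j0B)
          then show False using y(3) j(2) by simp
        qed
        moreover have "j \<in> {1..<i}" using True j by simp
        ultimately show ?thesis using B_def by simp
      next
        case False
        have "{u\<in>C k. r u \<le> j} = {u\<in>C k. r u \<le> i}"
          using between False j(3) x(3) by force
        then have "card {u\<in>C k. r u \<le> j} = a" using a_def by simp
        moreover have "card {u\<in>C k. rs u \<le> i} \<le> card {u\<in>C k. rs u \<le> j}"
          using fCk False by (intro card_mono) auto
        moreover have "int (card {u\<in>C k. rs u \<le> j}) \<le> ub j k" using rS_feas[OF rsS j(1) k] .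
        ultimately show ?thesis using a_lt2 by linarith
      qed
      have qS: "r \<circ> tr x y \<in> S" by (rule swap_cross[OF rS k x(1) y(1) yCk ryx hyp])
      have "\<forall>w\<in>L. (r \<circ> tr x y) w \<le> r w"
      proof
        fix w assume "w \<in> L"
        show "(r \<circ> tr x y) w \<le> r w"
        proof (cases "w = x")
          case True then show ?thesis using ryx by (simp add: tr_def)
        next
          case F: False
          then have "w \<noteq> y" using y \<open>w \<in> L\<close> by auto
          then show ?thesis using F by (simp add: tr_def)
        qed
      qed
      moreover have "(r \<circ> tr x y) x < r x" using ryx by (simp add: tr_def)
      ultimately show ?thesis using qS True by blast
    qed
  qed
qed

end


lemma abel_repr:
  fixes f :: "nat \<Rightarrow> real" and m p :: nat
  assumes "p \<in> {1..m}"
  shows "f p = f m + (\<Sum>i\<in>{1..<m}. if p \<le> i then f i - f (Suc i) else 0)"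
proof -
  have "(\<Sum>i\<in>{1..<m}. if p \<le> i then f i - f (Suc i) else 0) = (\<Sum>i\<in>{p..<m}. f i - f (Suc i))"
  proof -
    have "(\<Sum>i\<in>{1..<m}. if p \<le> i then f i - f (Suc i) else 0) = (\<Sum>i\<in>{i\<in>{1..<m}. p \<le> i}. f i - f (Suc i))"
      by (rule sum.inter_filter[symmetric]) simp
    also have "{i\<in>{1..<m}. p \<le> i} = {p..<m}" using assms by auto
    finally show ?thesis .
  qed
  also have "\<dots> = - (\<Sum>i\<in>{p..<m}. f (Suc i) - f i)" by (simp add: sum_negf[symmetric])
  also have "\<dots> = f p - f m" using sum_Suc_diff'[of p m f] assms by simp
  finally show ?thesis by simp
qed

lemma abel_sum:
  fixes f :: "nat \<Rightarrow> real" and m :: nat and r :: "'a \<Rightarrow> nat"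
  assumes "finite L" "\<forall>w\<in>L. r w \<in> {1..m}"
  shows "(\<Sum>w\<in>L. f (r w)) = real (card L) * f m + (\<Sum>i\<in>{1..<m}. (f i - f (Suc i)) * real (NL L r i))"
proof -
  have "(\<Sum>w\<in>L. f (r w)) = (\<Sum>w\<in>L. f m + (\<Sum>i\<in>{1..<m}. if r w \<le> i then f i - f (Suc i) else 0))"
    using assms(2) abel_repr by (intro sum.cong) auto
  also have "\<dots> = real (card L) * f m + (\<Sum>i\<in>{1..<m}. \<Sum>w\<in>L. if r w \<le> i then f i - f (Suc i) else 0)"
    by (simp add: sum.distrib sum.swap[of _ L])
  also have "(\<Sum>i\<in>{1..<m}. \<Sum>w\<in>L. if r w \<le> i then f i - f (Suc i) else 0)
      = (\<Sum>i\<in>{1..<m}. (f i - f (Suc i)) * real (NL L r i))"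
  proof (rule sum.cong[OF refl])
    fix i
    have "(\<Sum>w\<in>L. if r w \<le> i then f i - f (Suc i) else 0) = (\<Sum>w\<in>{w\<in>L. r w \<le> i}. f i - f (Suc i))"
      using assms(1) by (rule sum.inter_filter[symmetric])
    then show "(\<Sum>w\<in>L. if r w \<le> i then f i - f (Suc i) else 0) = (f i - f (Suc i)) * real (NL L r i)"
      by (simp add: NL_def)
  qed
  finally show ?thesis .
qed

lemma abel:
  fixes f :: "nat \<Rightarrow> real" and m :: nat
  assumes "finite L" and fm: "\<forall>i\<in>{1..m}. \<forall>j\<in>{1..m}. i \<le> j \<longrightarrow> f j \<le> f i"
   and r1: "\<forall>w\<in>L. r1 w \<in> {1..m}" and r2: "\<forall>w\<in>L. r2 w \<in> {1..m}"
   and dom: "\<forall>i. NL L r1 i \<le> NL L r2 i"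
  shows "(\<Sum>w\<in>L. f (r1 w)) \<le> (\<Sum>w\<in>L. f (r2 w))"
proof -
  have "(\<Sum>i\<in>{1..<m}. (f i - f (Suc i)) * real (NL L r1 i)) \<le> (\<Sum>i\<in>{1..<m}. (f i - f (Suc i)) * real (NL L r2 i))"
  proof (rule sum_mono)
    fix i assume "i \<in> {1..<m}"
    then have "f (Suc i) \<le> f i" using fm by auto
    then show "(f i - f (Suc i)) * real (NL L r1 i) \<le> (f i - f (Suc i)) * real (NL L r2 i)"
      using dom by (intro mult_left_mono) auto
  qed
  then show ?thesis using abel_sum[OF assms(1) r1, of f] abel_sum[OF assms(1) r2, of f] by simp
qed

context rk begin

lemma best:
  assumes rS: "r \<in> S" and L: "L \<subseteq> U"
  shows "\<exists>r'\<in>S. (\<forall>w\<in>L. r' w \<le> r w) \<and> (\<forall>rs\<in>S. \<forall>i. NL L rs i \<le> NL L r' i)"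
proof -
  define Q where "Q = (\<lambda>q. q \<in> S \<and> (\<forall>w\<in>L. q w \<le> r w))"
  have "Q r" using rS Q_def by simp
  then obtain r' where r': "Q r'" and mn: "\<And>q. Q q \<Longrightarrow> (\<Sum>w\<in>L. r' w) \<le> (\<Sum>w\<in>L. q w)"
    using ex_has_least_nat[of Q r "\<lambda>q. \<Sum>w\<in>L. q w"] by blast
  have r'S: "r' \<in> S" using r' Q_def by simp
  have finL: "finite L" using L finU finite_subset by blast
  have "\<forall>rs\<in>S. \<forall>i. NL L rs i \<le> NL L r' i"
  proof (rule ccontr)
    assume "\<not> ?thesis"
    then obtain rs i where rsS: "rs \<in> S" and bad: "NL L r' i < NL L rs i" by (auto simp: not_le)
    define i' where "i' = (LEAST i. NL L r' i < NL L rs i)"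
    have bad': "NL L r' i' < NL L rs i'" using bad i'_def by (metis LeastI)
    have minimal: "\<And>j. j < i' \<Longrightarrow> NL L rs j \<le> NL L r' j"
      using i'_def not_less_Least by (metis not_le)
    obtain q where qS: "q \<in> S" and q1: "\<forall>w\<in>L. q w \<le> r' w" and q2: "\<exists>w\<in>L. q w < r' w"
      using exchange[OF r'S rsS L bad' minimal] by blast
    have "Q q" using qS q1 r' Q_def by (meson order_trans)
    moreover have "(\<Sum>w\<in>L. q w) < (\<Sum>w\<in>L. r' w)"
      using sum_strict_mono_ex1[OF finL q1 q2] .
    ultimately show False using mn by fastforce
  qed
  then show ?thesis using r'S r' Q_def by blast
qed

end


context rk begin

lemma finS: "finite S"
proof (rule inj_on_finite[of "\<lambda>r. restrict r U" S "PiE U (\<lambda>_. {0..n})"])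
  show "inj_on (\<lambda>r. restrict r U) S"
  proof (rule inj_onI)
    fix r r' assume r: "r \<in> S" and r': "r' \<in> S" and e: "restrict r U = restrict r' U"
    show "r = r'"
    proof
      fix x show "r x = r' x"
      proof (cases "x \<in> U")
        case True then show ?thesis using fun_cong[OF e, of x] by simp
      next
        case False then show ?thesis using rS_out[OF r] rS_out[OF r'] by simp
      qed
    qed
  qed
  show "(\<lambda>r. restrict r U) ` S \<subseteq> PiE U (\<lambda>_. {0..n})"
    using rS_range by fastforce
  show "finite (PiE U (\<lambda>_. {0..n}))" using finU by (simp add: finite_PiE)
qed

lemma exp_sum:
  assumes "set_pmf D \<subseteq> S"
  shows "measure_pmf.expectation D h = (\<Sum>r\<in>S. pmf D r * h r)"
  using integral_measure_pmf[OF finS, of D h] assms by auto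

lemma avg_le:
  assumes "set_pmf D \<subseteq> S" "\<And>r. r \<in> S \<Longrightarrow> h r \<le> K"
  shows "(\<Sum>r\<in>S. pmf D r * h r) \<le> K"
proof -
  have "(\<Sum>r\<in>S. pmf D r * h r) \<le> (\<Sum>r\<in>S. pmf D r * K)"
    using assms(2) by (intro sum_mono mult_left_mono) auto
  also have "\<dots> = K" using sum_pmf_eq_1[OF finS assms(1)] by (simp add: sum_distrib_right[symmetric])
  finally show ?thesis .
qed

lemma avg_ge:
  assumes "set_pmf D \<subseteq> S" "\<And>r. r \<in> S \<Longrightarrow> K \<le> h r"
  shows "K \<le> (\<Sum>r\<in>S. pmf D r * h r)"
proof -
  have "(\<Sum>r\<in>S. pmf D r * K) \<le> (\<Sum>r\<in>S. pmf D r * h r)"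
    using assms(2) by (intro sum_mono mult_left_mono) auto
  moreover have "(\<Sum>r\<in>S. pmf D r * K) = K" using sum_pmf_eq_1[OF finS assms(1)] by (simp add: sum_distrib_right[symmetric])
  ultimately show ?thesis by simp
qed

lemma expval_sum:
  assumes "set_pmf D \<subseteq> S"
  shows "expval f g D u = (\<Sum>r\<in>S. pmf D r * (f (r u) - g u))"
  unfolding expval_def val_def by (rule exp_sum[OF assms])

lemma sum_expval:
  assumes "set_pmf D \<subseteq> S" "finite L"
  shows "(\<Sum>u\<in>L. expval f g D u) = (\<Sum>r\<in>S. pmf D r * (\<Sum>u\<in>L. f (r u) - g u))"
  using assms by (simp add: expval_sum sum_distrib_left sum.swap[of _ L])

lemma total:
  assumes "set_pmf D \<subseteq> S"
  shows "(\<Sum>u\<in>U. expval f g D u) = (\<Sum>i\<in>{1..n}. f i) - (\<Sum>u\<in>U. g u)"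
proof -
  have "(\<Sum>u\<in>U. expval f g D u) = (\<Sum>r\<in>S. pmf D r * (\<Sum>u\<in>U. f (r u) - g u))"
    by (rule sum_expval[OF assms finU])
  also have "\<dots> = (\<Sum>r\<in>S. pmf D r * ((\<Sum>i\<in>{1..n}. f i) - (\<Sum>u\<in>U. g u)))"
  proof (rule sum.cong[OF refl])
    fix r assume "r \<in> S"
    then have "(\<Sum>u\<in>U. f (r u)) = (\<Sum>i\<in>{1..n}. f i)"
      using sum.reindex_bij_betw[OF rS_bij] by blast
    then show "pmf D r * (\<Sum>u\<in>U. f (r u) - g u) = pmf D r * ((\<Sum>i\<in>{1..n}. f i) - (\<Sum>u\<in>U. g u))"
      by (simp add: sum_subtractf)
  qed
  also have "\<dots> = (\<Sum>i\<in>{1..n}. f i) - (\<Sum>u\<in>U. g u)"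
    using sum_pmf_eq_1[OF finS assms] by (simp add: sum_distrib_right[symmetric])
  finally show ?thesis .
qed

lemma level:
  assumes fm: "\<forall>i\<in>{1..n}. \<forall>j\<in>{1..n}. i \<le> j \<longrightarrow> f j \<le> f i"
    and Sne: "S \<noteq> {}" and fair: "maxmin_fair U S f g F" and DS: "set_pmf D \<subseteq> S"
  shows "(\<Sum>u\<in>{u\<in>U. expval f g F u \<le> c}. expval f g D u) \<le> (\<Sum>u\<in>{u\<in>U. expval f g F u \<le> c}. expval f g F u)"
proof (rule ccontr)
  define L where "L = {u\<in>U. expval f g F u \<le> c}"
  assume "\<not> ?thesis"
  then have gt: "(\<Sum>u\<in>L. expval f g F u) < (\<Sum>u\<in>L. expval f g D u)" using L_def by simp
  have LU: "L \<subseteq> U" using L_def by auto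
  have finL: "finite L" using LU finU finite_subset by blast
  have FS: "set_pmf F \<subseteq> S" using fair by (simp add: maxmin_fair_def)
  have "\<forall>r\<in>S. \<exists>r'. r' \<in> S \<and> (\<forall>w\<in>L. r' w \<le> r w) \<and> (\<forall>rs\<in>S. \<forall>i. NL L rs i \<le> NL L r' i)"
    using best[OF _ LU] by blast
  then obtain T where T: "\<And>r. r \<in> S \<Longrightarrow> T r \<in> S" "\<And>r w. r \<in> S \<Longrightarrow> w \<in> L \<Longrightarrow> T r w \<le> r w"
    "\<And>r rs i. r \<in> S \<Longrightarrow> rs \<in> S \<Longrightarrow> NL L rs i \<le> NL L (T r) i"
    by metis
  define G where "G = map_pmf T F"
  have GS: "set_pmf G \<subseteq> S" using FS T(1) G_def by auto
  have rng: "\<And>r w. r \<in> S \<Longrightarrow> w \<in> L \<Longrightarrow> r w \<in> {1..n}" using rS_range LU by fastforce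
  have Gexp: "expval f g G u = (\<Sum>r\<in>S. pmf F r * (f (T r u) - g u))" for u
    unfolding G_def expval_def val_def using exp_sum[OF FS] by simp
  have Gge: "expval f g F w \<le> expval f g G w" if w: "w \<in> L" for w
  proof -
    have "expval f g F w = (\<Sum>r\<in>S. pmf F r * (f (r w) - g w))" by (rule expval_sum[OF FS])
    also have "\<dots> \<le> (\<Sum>r\<in>S. pmf F r * (f (T r w) - g w))"
    proof (intro sum_mono mult_left_mono)
      fix r assume r: "r \<in> S"
      have "f (r w) \<le> f (T r w)" using fm rng[OF r w] rng[OF T(1)[OF r] w] T(2)[OF r w] by blast
      then show "f (r w) - g w \<le> f (T r w) - g w" by simp
    qed simp
    finally show ?thesis using Gexp by simp
  qed
  obtain r0 where r0: "r0 \<in> S" using Sne by blast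
  define M where "M = (\<Sum>w\<in>L. f (T r0 w))"
  have up: "(\<Sum>w\<in>L. f (r w)) \<le> M" if r: "r \<in> S" for r
    unfolding M_def
    by (rule abel[OF finL fm]) (use rng[OF r] rng[OF T(1)[OF r0]] T(3)[OF r0 r] in auto)
  have lo: "M \<le> (\<Sum>w\<in>L. f (T r w))" if r: "r \<in> S" for r
    unfolding M_def
    by (rule abel[OF finL fm]) (use rng[OF T(1)[OF r0]] rng[OF T(1)[OF r]] T(3)[OF r T(1)[OF r0]] in auto)
  have "(\<Sum>u\<in>L. expval f g D u) = (\<Sum>r\<in>S. pmf D r * (\<Sum>u\<in>L. f (r u) - g u))"
    by (rule sum_expval[OF DS finL])
  also have "\<dots> \<le> M - (\<Sum>u\<in>L. g u)"
    by (rule avg_le[OF DS]) (use up in \<open>simp add: sum_subtractf\<close>)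
  also have "\<dots> \<le> (\<Sum>r\<in>S. pmf F r * (\<Sum>u\<in>L. f (T r u) - g u))"
    by (rule avg_ge[OF FS]) (use lo in \<open>simp add: sum_subtractf\<close>)
  also have "\<dots> = (\<Sum>u\<in>L. expval f g G u)"
    using finL by (simp add: Gexp sum_distrib_left sum.swap[of _ L])
  finally have "(\<Sum>u\<in>L. expval f g F u) < (\<Sum>u\<in>L. expval f g G u)" using gt by simp
  then obtain w where w: "w \<in> L" "expval f g F w < expval f g G w"
    by (meson not_less sum_mono)
  have wU: "w \<in> U" using w LU by blast
  from fair GS wU w(2) obtain v where v: "v \<in> U" "expval f g G v < expval f g F v"
    "expval f g F v \<le> expval f g F w"
    unfolding maxmin_fair_def by blast
  have "v \<in> L" using v w(1) L_def by auto
  then show False using Gge v(2) by fastforce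
qed

end

theorem mainTheorem4:
  fixes U :: "'a set" and t :: nat and C :: "nat \<Rightarrow> 'a set" and ub :: "nat \<Rightarrow> nat \<Rightarrow> int"
    and R :: "'a \<Rightarrow> real" and f :: "nat \<Rightarrow> real" and g :: "'a \<Rightarrow> real"
    and \<phi> :: "real \<Rightarrow> real" and F D :: "('a \<Rightarrow> nat) pmf"
  assumes "finite U"
    and "\<forall>k\<in>{1..t}. C k \<subseteq> U"
    and "\<forall>k\<in>{1..t}. \<forall>l\<in>{1..t}. k \<noteq> l \<longrightarrow> C k \<inter> C l = {}"
    and "(\<Union>k\<in>{1..t}. C k) = U"
    and "inj_on R U"
    and "\<forall>i\<in>{1..card U}. \<forall>j\<in>{1..card U}. i \<le> j \<longrightarrow> f j \<le> f i"
    and "\<forall>u\<in>U. \<forall>v\<in>U. R u \<ge> R v \<longrightarrow> g u \<ge> g v"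
    and "concave_on UNIV \<phi>"
    and "feasible U t C ub \<noteq> {}"
    and "maxmin_fair U (feasible U t C ub) f g F"
    and "set_pmf D \<subseteq> feasible U t C ub"
  shows "(\<Sum>u\<in>U. \<phi> (expval f g F u)) \<ge> (\<Sum>u\<in>U. \<phi> (expval f g D u))"
proof -
  interpret rk U t C ub
    by unfold_locales (use assms(1-4) in auto)
  have FS: "set_pmf F \<subseteq> feasible U t C ub" using assms(10) by (simp add: maxmin_fair_def)
  show ?thesis
  proof (rule concave_majorize[OF assms(1,8)])
    show "(\<Sum>u\<in>{u \<in> U. expval f g F u \<le> c}. expval f g D u) \<le> (\<Sum>u\<in>{u \<in> U. expval f g F u \<le> c}. expval f g F u)" for c
      by (rule level[OF assms(6,9,10,11)])
    show "(\<Sum>u\<in>U. expval f g D u) = (\<Sum>u\<in>U. expval f g F u)"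
      using total[OF assms(11)] total[OF FS] by simp
  qed
qed

end
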